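(* Consider the discrete-time plant $$z_{k+1} = A_{ss} z_k + B_{1s} d_k + B_{2s} u_k,\quad e_k = C_{1s} z_k + D_{11} d_k + D_{12} u_k,\quad \hat y_k = z_k,\quad z_0\in\mathbb{I},$$ with $z_k\in\mathbb{R}^N$, $N=n+\bar N$, $u_k\in\mathbb{R}^{n_u}$, and $\mathbb{I} = \{(\bar p,\bar q) : \bar p\in\varepsilon(P),\ \bar q\in\varepsilon(Q)\}$, where $P\in\mathbb{S}^n$, $Q\in\mathbb{S}^{\bar N}$ are positive definite and $\varepsilon(P)=\{y: y^TPy\le 1\}$ (this is the lifted LPV model with all scheduling-parameter input matrices equal to zero, i.e., an LTI model). Then a static state-feedback LTI controller $u_k = D^c \hat y_k$ such that the closed loop is stable and $$\sup \{\lVert e \rVert_{\ell_2} \mid \lVert d \rVert_{\ell_2} \leq 1,\ z_0 \in \mathbb{I} \}< \gamma$$ exists if there exist a positive definite matrix $R \in \mathbb{S}^{N}$, a matrix $S \in \mathbb{R}^{n_u \times N}$, and positive scalars $b$, $f_{11}$, $f_{12}$, $f_2$ such that $$\begin{bmatrix} - R & A_{ss} R + B_{2s} S & B_{1s} & 0 \\ \ast & - R & 0 & (C_{1s} R + D_{12} S)^T \\ \ast & \ast & -f_2 I & D_{11}^T \\ \ast & \ast & \ast & -b I \end{bmatrix} \prec 0, \quad b + f_{11} + f_{12} + f_2 < 2\gamma, \quad \begin{bmatrix} F_1 & \Gamma^T \\ \Gamma & R \end{bmatrix} \succ 0,$$ where $\Gamma = \mathrm{diag}(P^{-1/2}, Q^{-1/2})$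 and $F_1 = \mathrm{diag}(f_{11} I_n, f_{12}I_{\bar{N}})$. If this problem is feasible, the controller is $u = SR^{-1}\hat y$, i.e., for the underlying nonlinear system with lifting map $\Phi$ and no measurement noise, $u = SR^{-1}\Phi(x)$.
   Context: $\ast$ denotes entries inferred by symmetry; $\mathbb{S}^m$ denotes real symmetric $m\times m$ matrices. *)

theory Defs
  imports "HOL-Analysis.Analysis"
begin

definition sym_mat :: "real^'n^'n \<Rightarrow> bool" where
  "sym_mat M \<longleftrightarrow> transpose M = M"

definition pos_def :: "real^'n^'n \<Rightarrow> bool" where
  "pos_def M \<longleftrightarrow> sym_mat M \<and> (\<forall>x. x \<noteq> 0 \<longrightarrow> 0 < x \<bullet> (M *v x))"

definition neg_def :: "real^'n^'n \<Rightarrow> bool" where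
  "neg_def M \<longleftrightarrow> pos_def (- M)"

definition inv_sqrt :: "real^'n^'n \<Rightarrow> real^'n^'n" where
  "inv_sqrt P = (THE M. pos_def M \<and> M ** M = matrix_inv P)"

definition block2 :: "real^'a^'a \<Rightarrow> real^'b^'a \<Rightarrow> real^'a^'b \<Rightarrow> real^'b^'b
    \<Rightarrow> real^('a + 'b)^('a + 'b)" where
  "block2 M11 M12 M21 M22 = (\<chi> i j. case i of
       Inl a \<Rightarrow> (case j of Inl a' \<Rightarrow> M11 $ a $ a' | Inr b' \<Rightarrow> M12 $ a $ b')
     | Inr b \<Rightarrow> (case j of Inl a' \<Rightarrow> M21 $ b $ a' | Inr b' \<Rightarrow> M22 $ b $ b'))"

definition blockr :: "real^'c^'a \<Rightarrow> real^'d^'a \<Rightarrow> real^'c^'b \<Rightarrow> real^'d^'b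
    \<Rightarrow> real^('c + 'd)^('a + 'b)" where
  "blockr M11 M12 M21 M22 = (\<chi> i j. case i of
       Inl a \<Rightarrow> (case j of Inl a' \<Rightarrow> M11 $ a $ a' | Inr b' \<Rightarrow> M12 $ a $ b')
     | Inr b \<Rightarrow> (case j of Inl a' \<Rightarrow> M21 $ b $ a' | Inr b' \<Rightarrow> M22 $ b $ b'))"

definition vjoin :: "real^'a \<Rightarrow> real^'b \<Rightarrow> real^('a + 'b)" where
  "vjoin p q = (\<chi> i. case i of Inl a \<Rightarrow> p $ a | Inr b \<Rightarrow> q $ b)"

definition ellipsoid :: "real^'n^'n \<Rightarrow> (real^'n) set" where
  "ellipsoid P = {y. y \<bullet> (P *v y) \<le> 1}"

definition init_set :: "real^'n^'n \<Rightarrow> real^'m^'m \<Rightarrow> (real^('n + 'm)) set" where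
  "init_set P Q = {vjoin p q | p q. p \<in> ellipsoid P \<and> q \<in> ellipsoid Q}"

definition l2norm :: "(nat \<Rightarrow> real^'a) \<Rightarrow> ennreal" where
  "l2norm s = (if summable (\<lambda>k. (norm (s k))\<^sup>2)
               then ennreal (sqrt (\<Sum>k. (norm (s k))\<^sup>2)) else \<infinity>)"

primrec cl_state :: "real^'N^'N \<Rightarrow> real^'d^'N \<Rightarrow> real^'u^'N \<Rightarrow> real^'N^'u
    \<Rightarrow> real^'N \<Rightarrow> (nat \<Rightarrow> real^'d) \<Rightarrow> nat \<Rightarrow> real^'N" where
  "cl_state A B1 B2 Dc z0 d 0 = z0"
| "cl_state A B1 B2 Dc z0 d (Suc k) =
     (let z = cl_state A B1 B2 Dc z0 d k in A *v z + B1 *v d k + B2 *v (Dc *v z))"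

definition cl_output :: "real^'N^'N \<Rightarrow> real^'d^'N \<Rightarrow> real^'u^'N \<Rightarrow> real^'N^'e
    \<Rightarrow> real^'d^'e \<Rightarrow> real^'u^'e \<Rightarrow> real^'N^'u
    \<Rightarrow> real^'N \<Rightarrow> (nat \<Rightarrow> real^'d) \<Rightarrow> nat \<Rightarrow> real^'e" where
  "cl_output A B1 B2 C1 D11 D12 Dc z0 d k =
     (let z = cl_state A B1 B2 Dc z0 d k in C1 *v z + D11 *v d k + D12 *v (Dc *v z))"

definition cl_stable :: "real^'N^'N \<Rightarrow> real^'d^'N \<Rightarrow> real^'u^'N \<Rightarrow> real^'N^'u \<Rightarrow> bool" where
  "cl_stable A B1 B2 Dc \<longleftrightarrow> (\<forall>z0. (\<lambda>k. cl_state A B1 B2 Dc z0 (\<lambda>_. 0) k) \<longlonglongrightarrow> 0)"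

end

theory Submission
  imports Defs
begin

lemma sum_UNIV_Plus:
  "sum f (UNIV::('a::finite+'b::finite) set) = sum (\<lambda>a. f (Inl a)) UNIV + sum (\<lambda>b. f (Inr b)) UNIV"
  by (metis (no_types, lifting) UNIV_Plus_UNIV finite sum.Plus comp_def sum.cong)

lemma inner_transpose: "x \<bullet> (transpose M *v y) = (M *v x) \<bullet> (y::real^'a)"
  by (metis dot_lmul_matrix inner_commute transpose_matrix_vector)

lemma sym_inner: "transpose M = M \<Longrightarrow> x \<bullet> (M *v y) = (M *v x) \<bullet> (y::real^'a)"
  by (metis inner_transpose)

lemma mv_block2: "block2 M11 M12 M21 M22 *v vjoin x y =
   vjoin (M11 *v x + M12 *v y) (M21 *v x + M22 *v y)"
  unfolding vec_eq_iff
  by (auto simp: matrix_vector_mult_def block2_def vjoin_def sum_UNIV_Plus split: sum.splits)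

lemma mv_blockr: "blockr M11 M12 M21 M22 *v vjoin x y =
   vjoin (M11 *v x + M12 *v y) (M21 *v x + M22 *v y)"
  unfolding vec_eq_iff
  by (auto simp: matrix_vector_mult_def blockr_def vjoin_def sum_UNIV_Plus split: sum.splits)

lemma inner_vjoin: "vjoin a b \<bullet> vjoin c d = a \<bullet> c + b \<bullet> (d::real^'b)"
  by (simp add: inner_vec_def vjoin_def sum_UNIV_Plus)

lemma norm_vjoin: "(norm (vjoin a b))\<^sup>2 = (norm a)\<^sup>2 + (norm (b::real^'b))\<^sup>2"
  by (simp add: power2_norm_eq_inner inner_vjoin)

lemma vjoin_zero_iff: "vjoin a b = 0 \<longleftrightarrow> a = 0 \<and> b = 0"
  unfolding vec_eq_iff vjoin_def by (auto split: sum.splits)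

lemma neg_mv: "(- M) *v x = - (M *v (x::real^'a))"
  unfolding vec_eq_iff by (simp add: matrix_vector_mult_def sum_negf)

lemma mv_neg: "M *v (- x) = - (M *v (x::real^'a))"
  unfolding vec_eq_iff by (simp add: matrix_vector_mult_def sum_negf)

lemma mv_zero_mat: "(0::real^'a^'b) *v x = 0"
  unfolding vec_eq_iff by (simp add: matrix_vector_mult_def)

lemma pos_def_nonneg: "pos_def M \<Longrightarrow> 0 \<le> x \<bullet> (M *v x)"
  unfolding pos_def_def by (cases "x = 0") (auto intro: less_imp_le)

lemma pos_def_invertible: assumes "pos_def (M::real^'a^'a)" shows "invertible M"
proof -
  have "\<forall>x. M *v x = 0 \<longrightarrow> x = 0" using assms unfolding pos_def_def by force
  then show ?thesis by (simp add: invertible_left_inverse matrix_left_invertible_ker)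
qed

lemma matrix_inv_props: assumes "invertible (M::real^'a^'a)"
  shows "M ** matrix_inv M = mat 1" "matrix_inv M ** M = mat 1"
  using someI_ex[OF assms[unfolded invertible_def]] unfolding matrix_inv_def by auto

lemma matrix_inv_mv: assumes "invertible (M::real^'a^'a)"
  shows "M *v (matrix_inv M *v x) = x" "matrix_inv M *v (M *v x) = x"
  by (simp_all add: matrix_vector_mul_assoc matrix_inv_props[OF assms])

lemma matrix_inv_sym: assumes "invertible (M::real^'a^'a)" "transpose M = M"
  shows "transpose (matrix_inv M) = matrix_inv M"
proof -
  have "transpose (matrix_inv M) ** M = mat 1"
    by (metis assms matrix_inv_props(1) matrix_transpose_mul transpose_mat)
  then have "transpose (matrix_inv M) = transpose (matrix_inv M) ** (M ** matrix_inv M)"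
    using matrix_inv_props(1)[OF assms(1)] by (simp add: matrix_mul_rid)
  also have "\<dots> = matrix_inv M"
    by (simp add: matrix_mul_assoc \<open>transpose (matrix_inv M) ** M = mat 1\<close> matrix_mul_lid)
  finally show ?thesis .
qed

lemma pos_def_inv: assumes "pos_def (M::real^'a^'a)" shows "pos_def (matrix_inv M)"
proof -
  have inv: "invertible M" using pos_def_invertible assms .
  have s: "transpose M = M" using assms unfolding pos_def_def sym_mat_def by auto
  show ?thesis unfolding pos_def_def sym_mat_def
  proof (intro conjI allI impI)
    show "transpose (matrix_inv M) = matrix_inv M" using matrix_inv_sym inv s by blast
    fix x :: "real^'a" assume "x \<noteq> 0"
    define y where "y = matrix_inv M *v x"
    have x: "x = M *v y" using matrix_inv_mv[OF inv] y_def by simp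
    then have "y \<noteq> 0" using \<open>x \<noteq> 0\<close> by auto
    then have "0 < y \<bullet> (M *v y)" using assms unfolding pos_def_def by auto
    then show "0 < x \<bullet> (matrix_inv M *v x)"
      by (simp add: x[symmetric] y_def[symmetric] inner_commute)
  qed
qed


definition on_fam :: "real^'n^'n \<Rightarrow> (real^'n) set \<Rightarrow> bool" where
  "on_fam T B \<longleftrightarrow> finite B \<and> pairwise orthogonal B \<and>
     (\<forall>u\<in>B. norm u = 1 \<and> T *v u = (u \<bullet> (T *v u)) *\<^sub>R u)"

lemma quad_aux: fixes a c d :: real assumes "d > 0"
  shows "d^2 * (2*(a/d)*a + (a/d)^2*c) = a^2 * (2*d + c)"
  using assms by (simp add: field_simps power2_eq_square)

lemma quad_neg_zero:
  fixes a c :: real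
  assumes "\<And>t. 2*t*a + t^2*c \<le> 0"
  shows "a = 0"
proof -
  define d where "d = 1 + \<bar>c\<bar>"
  have pos: "0 < d" unfolding d_def by simp
  have "d^2 * (2*(a/d)*a + (a/d)^2*c) \<le> 0"
    using assms[of "a/d"] pos by (simp add: mult_nonneg_nonpos)
  then have "a^2 * (2*d + c) \<le> 0" using quad_aux[OF pos] by simp
  moreover have "2*d + c > 0" unfolding d_def by (cases "c \<ge> 0") auto
  ultimately have "a^2 \<le> 0" by (simp add: mult_le_0_iff)
  then show ?thesis by simp
qed

lemma spectral_step:
  fixes T :: "real^'n^'n"
  assumes sym: "transpose T = T" and fam: "on_fam T B" and sp: "span B \<noteq> UNIV"
  shows "\<exists>v. v \<notin> B \<and> on_fam T (insert v B)"
proof -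
  obtain a where a0: "a \<noteq> 0" and aorth: "\<forall>x\<in>span B. a \<bullet> x = 0"
    using span_not_UNIV_orthogonal[OF sp] by blast
  define W where "W = {x. \<forall>u\<in>B. u \<bullet> x = 0}"
  have aW: "a \<in> W" using aorth span_base unfolding W_def by (fastforce simp: inner_commute)
  have Wsub: "x + t *\<^sub>R y \<in> W" if "x \<in> W" "y \<in> W" for x y t
    using that unfolding W_def by (simp add: inner_add_right)
  have Wscale: "t *\<^sub>R y \<in> W" if "y \<in> W" for y t
    using that unfolding W_def by simp
  have "W = (\<Inter>u\<in>B. {x. u \<bullet> x = 0})" unfolding W_def by auto
  then have cW: "closed W" by (simp add: closed_INT closed_hyperplane)
  define K where "K = sphere 0 1 \<inter> W"
  have cK: "compact K" unfolding K_def by (rule compact_Int_closed[OF compact_sphere cW])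
  have "(1 / norm a) *\<^sub>R a \<in> K" using a0 aW Wscale unfolding K_def by simp
  then have neK: "K \<noteq> {}" by blast
  define f where "f x = x \<bullet> (T *v x)" for x
  have "continuous_on K f" unfolding f_def
    by (intro continuous_intros matrix_vector_mult_linear_continuous_on)
  then obtain v where vK: "v \<in> K" and vmax: "\<forall>y\<in>K. f y \<le> f v"
    using continuous_attains_sup[OF cK neK] by blast
  define \<mu> where "\<mu> = f v"
  have vW: "v \<in> W" and nv: "norm v = 1" using vK unfolding K_def by auto
  have vv: "v \<bullet> v = 1" using nv by (simp add: norm_eq_1)
  have fscale: "f (c *\<^sub>R x) = c^2 * f x" for c x
    unfolding f_def by (simp add: matrix_vector_mult_scaleR power2_eq_square)
  have bound: "f x \<le> \<mu> * (x \<bullet> x)" if "x \<in> W" for x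
  proof (cases "x = 0")
    case True then show ?thesis by (simp add: f_def)
  next
    case False
    have "(1 / norm x) *\<^sub>R x \<in> K" using False that Wscale unfolding K_def by simp
    then have "f ((1 / norm x) *\<^sub>R x) \<le> \<mu>" using vmax \<mu>_def by blast
    then have "f x / (norm x)^2 \<le> \<mu>" by (simp add: fscale power_divide)
    moreover have "(norm x)^2 > 0" using False by simp
    ultimately have "f x \<le> \<mu> * (norm x)^2" by (simp add: divide_le_eq)
    then show ?thesis by (simp add: power2_norm_eq_inner)
  qed
  have key: "w \<bullet> (T *v v) = \<mu> * (w \<bullet> v)" if wW: "w \<in> W" for w
  proof -
    define a where "a = w \<bullet> (T *v v) - \<mu> * (w \<bullet> v)"
    define c where "c = w \<bullet> (T *v w) - \<mu> * (w \<bullet> w)"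
    have "2*t*a + t^2*c \<le> 0" for t
    proof -
      have "f (v + t *\<^sub>R w) \<le> \<mu> * ((v + t *\<^sub>R w) \<bullet> (v + t *\<^sub>R w))"
        using bound Wsub[OF vW wW] by blast
      moreover have "f (v + t *\<^sub>R w) = \<mu> + 2 * t * (w \<bullet> (T *v v)) + t^2 * (w \<bullet> (T *v w))"
      proof -
        have "v \<bullet> (T *v w) = w \<bullet> (T *v v)"
          using sym_inner[OF sym, of v w] by (simp add: inner_commute)
        then show ?thesis unfolding f_def \<mu>_def
          by (simp add: matrix_vector_right_distrib matrix_vector_mult_scaleR inner_add_left
              inner_add_right power2_eq_square algebra_simps)
      qed
      moreover have "(v + t *\<^sub>R w) \<bullet> (v + t *\<^sub>R w) = 1 + 2*t*(w \<bullet> v) + t^2 * (w \<bullet> w)"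
        using vv by (simp add: inner_add_left inner_add_right inner_commute power2_eq_square algebra_simps)
      ultimately have "\<mu> + 2 * t * (w \<bullet> (T *v v)) + t^2 * (w \<bullet> (T *v w))
          \<le> \<mu> * (1 + 2*t*(w \<bullet> v) + t^2 * (w \<bullet> w))" by simp
      moreover have "\<mu> * (1 + 2*t*(w \<bullet> v) + t^2 * (w \<bullet> w)) + (2*t*a + t^2*c)
          = \<mu> + 2 * t * (w \<bullet> (T *v v)) + t^2 * (w \<bullet> (T *v w))"
        unfolding a_def c_def by (simp add: algebra_simps)
      ultimately show ?thesis by linarith
    qed
    then have "a = 0" by (rule quad_neg_zero)
    then show ?thesis unfolding a_def by simp
  qed
  define y where "y = T *v v - \<mu> *\<^sub>R v"
  have yW: "y \<in> W" unfolding W_def mem_Collect_eq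
  proof (intro ballI)
    fix u assume uB: "u \<in> B"
    have uv: "u \<bullet> v = 0" using vW uB unfolding W_def by auto
    have "u \<bullet> (T *v v) = (T *v u) \<bullet> v" using sym_inner[OF sym] by blast
    also have "\<dots> = (u \<bullet> (T *v u)) * (u \<bullet> v)" using fam uB unfolding on_fam_def
      by (metis inner_scaleR_left)
    finally show "u \<bullet> y = 0" unfolding y_def using uv by (simp add: inner_diff_right)
  qed
  have "y \<bullet> y = 0" using key[OF yW] unfolding y_def by (simp add: inner_diff_right)
  then have y0: "T *v v = \<mu> *\<^sub>R v" unfolding y_def by simp
  have vnB: "v \<notin> B"
  proof
    assume "v \<in> B" then have "v \<bullet> v = 0" using vW unfolding W_def by auto
    then show False using vv by simp
  qed
  have "on_fam T (insert v B)"
    unfolding on_fam_def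
  proof (intro conjI)
    show "finite (insert v B)" using fam unfolding on_fam_def by simp
    show "pairwise orthogonal (insert v B)"
      using fam vW unfolding on_fam_def pairwise_insert W_def orthogonal_def
      by (auto simp: inner_commute)
    show "\<forall>u\<in>insert v B. norm u = 1 \<and> T *v u = (u \<bullet> (T *v u)) *\<^sub>R u"
      using fam nv y0 vv unfolding on_fam_def \<mu>_def f_def by auto
  qed
  then show ?thesis using vnB by blast
qed


lemma on_fam_indep: "on_fam T B \<Longrightarrow> independent B"
  unfolding on_fam_def by (metis norm_zero pairwise_orthogonal_independent zero_neq_one)

lemma spectral:
  fixes T :: "real^'n^'n"
  assumes sym: "transpose T = T"
  shows "\<exists>B. on_fam T B \<and> span B = UNIV"
proof -
  have e: "on_fam T {}" unfolding on_fam_def by simp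
  have "\<forall>B. on_fam T B \<longrightarrow> card B < DIM(real^'n) + 1"
    using on_fam_indep independent_card_le by (metis less_Suc_eq_le Suc_eq_plus1)
  then obtain B where fB: "on_fam T B" and mx: "\<forall>B'. on_fam T B' \<longrightarrow> card B' \<le> card B"
    using Lattices_Big.ex_has_greatest_nat[of "on_fam T" "{}" card, OF e] by blast
  show ?thesis
  proof (rule ccontr)
    assume "\<not> ?thesis"
    then have "span B \<noteq> UNIV" using fB by blast
    then obtain v where "v \<notin> B" "on_fam T (insert v B)" using spectral_step[OF sym fB] by blast
    moreover have "finite B" using fB unfolding on_fam_def by simp
    ultimately have "card (insert v B) = card B + 1" by simp
    then show False using mx \<open>on_fam T (insert v B)\<close> by fastforce
  qed
qed

lemma orth_inner:
  assumes "on_fam T B" "u \<in> B" "u' \<in> B"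
  shows "u \<bullet> u' = (if u = u' then 1 else 0)"
  using assms unfolding on_fam_def pairwise_def orthogonal_def
  by (auto simp: norm_eq_1)

lemma sqrt_exists:
  fixes T :: "real^'n^'n"
  assumes pd: "pos_def T"
  shows "\<exists>M. pos_def M \<and> M ** M = T"
proof -
  have sym: "transpose T = T" using pd unfolding pos_def_def sym_mat_def by simp
  obtain B where fB: "on_fam T B" and spB: "span B = UNIV" using spectral[OF sym] by blast
  have fin: "finite B" using fB unfolding on_fam_def by simp
  define lam where "lam u = u \<bullet> (T *v u)" for u
  have eig: "T *v u = lam u *\<^sub>R u" if "u \<in> B" for u
    using fB that unfolding on_fam_def lam_def by blast
  have lpos: "lam u > 0" if "u \<in> B" for u
  proof -
    have "u \<noteq> 0" using fB that unfolding on_fam_def by auto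
    then show ?thesis using pd unfolding pos_def_def lam_def by blast
  qed
  define s where "s u = sqrt (lam u)" for u
  have spos: "s u > 0" if "u \<in> B" for u using lpos[OF that] unfolding s_def by simp
  have ss: "s u * s u = lam u" if "u \<in> B" for u
    using lpos[OF that] unfolding s_def by (simp add: less_imp_le)
  have expand: "x = (\<Sum>u\<in>B. (u \<bullet> x) *\<^sub>R u)" for x
  proof -
    have "(\<Sum>u\<in>B. (x \<bullet> u) *\<^sub>R u) = x"
      by (rule orthonormal_basis_expand) (use fB spB fin in \<open>auto simp: on_fam_def\<close>)
    then show ?thesis by (simp add: inner_commute)
  qed
  define M :: "real^'n^'n" where "M = (\<chi> i j. \<Sum>u\<in>B. s u * u$i * u$j)"
  have Mv: "M *v x = (\<Sum>u\<in>B. (s u * (u \<bullet> x)) *\<^sub>R u)" for x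
    unfolding vec_eq_iff
    by (simp add: M_def matrix_vector_mult_def sum_component inner_vec_def
        sum_distrib_left sum_distrib_right sum.swap[of _ B] algebra_simps)
  have innerM: "u \<bullet> (M *v x) = s u * (u \<bullet> x)" if uB: "u \<in> B" for u x
  proof -
    have "u \<bullet> (M *v x) = (\<Sum>u'\<in>B. (s u' * (u' \<bullet> x)) * (u \<bullet> u'))"
      by (simp add: Mv inner_sum_right)
    also have "\<dots> = (\<Sum>u'\<in>B. if u' = u then s u * (u \<bullet> x) else 0)"
      by (rule sum.cong) (use orth_inner[OF fB uB] in auto)
    also have "\<dots> = s u * (u \<bullet> x)" using uB fin by simp
    finally show ?thesis .
  qed
  have MM: "M ** M = T"
    unfolding matrix_eq
  proof
    fix x
    have "(M ** M) *v x = M *v (M *v x)" by (simp add: matrix_vector_mul_assoc)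
    also have "\<dots> = (\<Sum>u\<in>B. (lam u * (u \<bullet> x)) *\<^sub>R u)"
      unfolding Mv[of "M *v x"] by (rule sum.cong) (auto simp: innerM ss[symmetric])
    also have "\<dots> = (\<Sum>u\<in>B. (u \<bullet> x) *\<^sub>R (T *v u))"
      by (rule sum.cong) (auto simp: eig)
    also have "\<dots> = T *v x"
      by (subst (2) expand) (simp add: vec.sum matrix_vector_mult_scaleR)
    finally show "(M ** M) *v x = T *v x" .
  qed
  have symM: "transpose M = M"
    unfolding vec_eq_iff transpose_def M_def by (simp add: mult.commute mult.left_commute)
  have pM: "pos_def M" unfolding pos_def_def sym_mat_def
  proof (intro conjI allI impI symM)
    fix x :: "real^'n" assume "x \<noteq> 0"
    then obtain u where uB: "u \<in> B" and ux: "u \<bullet> x \<noteq> 0"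
      using expand[of x] by (metis (no_types, lifting) scale_zero_left sum.neutral)
    have "x \<bullet> (M *v x) = (\<Sum>u\<in>B. s u * (u \<bullet> x)^2)"
      by (simp add: Mv inner_sum_right power2_eq_square inner_commute algebra_simps)
    also have "\<dots> > 0"
    proof (rule sum_pos2[OF fin uB])
      show "0 < s u * (u \<bullet> x)\<^sup>2" using spos[OF uB] ux by simp
      show "0 \<le> s i * (i \<bullet> x)\<^sup>2" if "i \<in> B" for i
        using spos[OF that] by simp
    qed
    finally show "0 < x \<bullet> (M *v x)" .
  qed
  show ?thesis using pM MM by blast
qed


lemma sqrt_unique:
  fixes M N :: "real^'n^'n"
  assumes pM: "pos_def M" and pN: "pos_def N" and eq: "M ** M = N ** N"
  shows "M = N"
proof -
  have symN: "N $ k $ j = N $ j $ k" for j k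
  proof -
    have "transpose N = N" using pN unfolding pos_def_def sym_mat_def by simp
    then have "(transpose N) $ j $ k = N $ j $ k" by simp
    then show ?thesis by (simp add: transpose_def)
  qed
  define D where "D = M - N"
  have E: "(M ** D) $ i $ j + (D ** N) $ i $ j = 0" for i j
  proof -
    have "(M ** M) $ i $ j = (N ** N) $ i $ j" using eq by simp
    moreover have "(M ** D) $ i $ j + (D ** N) $ i $ j =
        (\<Sum>k\<in>UNIV. M$i$k * M$k$j) - (\<Sum>k\<in>UNIV. N$i$k * N$k$j)"
    proof -
      have "(M ** D) $ i $ j + (D ** N) $ i $ j =
          (\<Sum>k\<in>UNIV. M$i$k * (M$k$j - N$k$j) + (M$i$k - N$i$k) * N$k$j)"
        by (simp add: D_def matrix_matrix_mult_def sum.distrib)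
      also have "\<dots> = (\<Sum>k\<in>UNIV. M$i$k * M$k$j - N$i$k * N$k$j)"
        by (rule sum.cong) (simp_all add: algebra_simps)
      finally show ?thesis by (simp add: sum_subtractf)
    qed
    ultimately show ?thesis by (simp add: matrix_matrix_mult_def)
  qed
  define c where "c j = (\<chi> i. D $ i $ j)" for j
  have A: "(\<Sum>j\<in>UNIV. c j \<bullet> (M *v c j)) = (\<Sum>j\<in>UNIV. \<Sum>i\<in>UNIV. D$i$j * (M ** D)$i$j)"
    by (simp add: c_def inner_vec_def matrix_vector_mult_def matrix_matrix_mult_def)
  have B: "(\<Sum>i\<in>UNIV. D$i \<bullet> (N *v D$i)) = (\<Sum>j\<in>UNIV. \<Sum>i\<in>UNIV. D$i$j * (D ** N)$i$j)"
    apply (subst sum.swap)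
    apply (simp add: inner_vec_def matrix_vector_mult_def matrix_matrix_mult_def)
    apply (intro sum.cong refl)
    apply (simp add: symN mult.commute)
    done
  have "(\<Sum>j\<in>UNIV. c j \<bullet> (M *v c j)) + (\<Sum>i\<in>UNIV. D$i \<bullet> (N *v D$i)) = 0"
    unfolding A B sum.distrib[symmetric] distrib_left[symmetric] E by simp
  moreover have "\<forall>j\<in>UNIV. 0 \<le> c j \<bullet> (M *v c j)" using pos_def_nonneg[OF pM] by blast
  moreover have "\<forall>i\<in>UNIV. 0 \<le> D$i \<bullet> (N *v D$i)" using pos_def_nonneg[OF pN] by blast
  ultimately have "(\<Sum>j\<in>UNIV. c j \<bullet> (M *v c j)) = 0"
    by (metis (no_types, lifting) add_nonneg_eq_0_iff sum_nonneg)
  then have "\<forall>j\<in>UNIV. c j \<bullet> (M *v c j) = 0"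
    using sum_nonneg_eq_0_iff[of UNIV "\<lambda>j. c j \<bullet> (M *v c j)"] pos_def_nonneg[OF pM] by auto
  then have "c j = 0" for j using pM unfolding pos_def_def by force
  then have "D $ i $ j = 0" for i j unfolding c_def vec_eq_iff by (metis vec_lambda_beta zero_index)
  then have "D = 0" unfolding vec_eq_iff by simp
  then show ?thesis unfolding D_def by simp
qed

lemma inv_sqrt_props:
  fixes P :: "real^'n^'n"
  assumes "pos_def P"
  shows "pos_def (inv_sqrt P) \<and> inv_sqrt P ** inv_sqrt P = matrix_inv P"
proof -
  have ex: "\<exists>!M. pos_def M \<and> M ** M = matrix_inv P"
  proof -
    obtain M where M: "pos_def M" "M ** M = matrix_inv P"
      using sqrt_exists[OF pos_def_inv[OF assms]] by blast
    show ?thesis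
    proof (rule ex1I[of _ M])
      show "pos_def M \<and> M ** M = matrix_inv P" using M by simp
      fix y assume "pos_def y \<and> y ** y = matrix_inv P"
      then show "y = M" using sqrt_unique[of y M] M by simp
    qed
  qed
  show ?thesis unfolding inv_sqrt_def by (rule theI'[OF ex])
qed


lemma pos_def_coercive:
  fixes M :: "real^'a^'a"
  assumes pd: "pos_def M"
  shows "\<exists>\<epsilon>>0. \<forall>x. \<epsilon> * (norm x)^2 \<le> x \<bullet> (M *v x)"
proof -
  define f where "f x = x \<bullet> (M *v x)" for x
  have "continuous_on (sphere 0 1) f" unfolding f_def
    by (intro continuous_intros matrix_vector_mult_linear_continuous_on)
  moreover have "sphere (0::real^'a) 1 \<noteq> {}" by (simp add: sphere_eq_empty)
  ultimately obtain x0 where x0: "x0 \<in> sphere 0 1" and mn: "\<forall>y\<in>sphere 0 1. f x0 \<le> f y"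
    using continuous_attains_inf[OF compact_sphere] by blast
  have "x0 \<noteq> 0" using x0 by auto
  then have epos: "f x0 > 0" using pd unfolding pos_def_def f_def by blast
  have fscale: "f (c *\<^sub>R x) = c^2 * f x" for c x
    unfolding f_def by (simp add: matrix_vector_mult_scaleR power2_eq_square)
  have "f x0 * (norm x)^2 \<le> f x" for x
  proof (cases "x = 0")
    case True then show ?thesis by (simp add: f_def)
  next
    case False
    have "(1 / norm x) *\<^sub>R x \<in> sphere 0 1" using False by simp
    then have "f x0 \<le> f ((1 / norm x) *\<^sub>R x)" using mn by blast
    then have "f x0 \<le> f x / (norm x)^2" by (simp add: fscale power_divide)
    moreover have "(norm x)^2 > 0" using False by simp
    ultimately show ?thesis by (simp add: le_divide_eq)
  qed
  then show ?thesis using epos unfolding f_def by blast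
qed

lemma inner_vmul: "x \<bullet> (y v* M) = (M *v x) \<bullet> (y::real^'a)"
  by (metis inner_transpose transpose_matrix_vector)

lemma scaleR_mv: "(c *\<^sub>R M) *v x = c *\<^sub>R (M *v (x::real^'a))"
  by (simp add: scaleR_matrix_vector_assoc)

lemma LMI1_form:
  fixes R :: "real^'N^'N" and Mm :: "real^'N^'N" and B1 :: "real^'d^'N"
    and Nn :: "real^'N^'e" and D11 :: "real^'d^'e"
  shows "vjoin (vjoin v1 v2) (vjoin dd v4) \<bullet>
     (block2 (block2 (- R) Mm (transpose Mm) (- R))
        (blockr B1 (0 :: real^'e^'N) (0 :: real^'d^'N) (transpose Nn))
        (blockr (transpose B1) (0 :: real^'N^'d) (0 :: real^'N^'e) Nn)
        (block2 (- (f2 *\<^sub>R mat 1)) (transpose D11) D11 (- (b *\<^sub>R mat 1)))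
      *v vjoin (vjoin v1 v2) (vjoin dd v4))
   = - (v1 \<bullet> (R *v v1)) + 2 * (v1 \<bullet> (Mm *v v2 + B1 *v dd)) - v2 \<bullet> (R *v v2)
     + 2 * (v4 \<bullet> (Nn *v v2 + D11 *v dd)) - f2 * (dd \<bullet> dd) - b * (v4 \<bullet> v4)"
  by (simp add: mv_block2 mv_blockr inner_vjoin neg_mv mv_zero_mat inner_transpose inner_vmul scaleR_mv
      inner_add_left inner_add_right matrix_vector_mult_scaleR inner_commute algebra_simps)

lemma LMI2_form:
  fixes R :: "real^('n::finite+'m::finite)^('n+'m)" and G :: "real^'n^'n" and H :: "real^'m^'m"
  shows "vjoin (vjoin u1 u2) v \<bullet>
     (block2
        (block2 (f11 *\<^sub>R mat 1) (0 :: real^'m^'n) (0 :: real^'n^'m) (f12 *\<^sub>R mat 1))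
        (transpose (block2 G (0 :: real^'m^'n) (0 :: real^'n^'m) H))
        (block2 G (0 :: real^'m^'n) (0 :: real^'n^'m) H)
        R *v vjoin (vjoin u1 u2) v)
   = f11 * (u1 \<bullet> u1) + f12 * (u2 \<bullet> u2) + 2 * (vjoin (G *v u1) (H *v u2) \<bullet> v) + v \<bullet> (R *v v)"
  by (simp add: mv_block2 inner_vjoin mv_zero_mat inner_transpose inner_vmul scaleR_mv
      inner_add_left inner_add_right matrix_vector_mult_scaleR inner_commute algebra_simps)


lemma ellipsoid_param:
  fixes P :: "real^'n^'n"
  assumes pd: "pos_def P" and pe: "p \<in> ellipsoid P"
  shows "\<exists>u. inv_sqrt P *v u = p \<and> u \<bullet> u \<le> 1"
proof -
  define G where "G = inv_sqrt P"
  have pG: "pos_def G" and GG: "G ** G = matrix_inv P"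
    using inv_sqrt_props[OF pd] unfolding G_def by auto
  have symG: "transpose G = G" using pG unfolding pos_def_def sym_mat_def by simp
  define u where "u = G *v (P *v p)"
  have "G *v u = (G ** G) *v (P *v p)" unfolding u_def by (metis matrix_vector_mul_assoc)
  also have "\<dots> = p" unfolding GG using matrix_inv_mv(2)[OF pos_def_invertible[OF pd]] .
  finally have Gu: "G *v u = p" .
  have "u \<bullet> u = (P *v p) \<bullet> (G *v u)"
    unfolding u_def using sym_inner[OF symG, of "P *v p" "G *v (P *v p)"] by simp
  also have "\<dots> = p \<bullet> (P *v p)" unfolding Gu by (simp add: inner_commute)
  also have "\<dots> \<le> 1" using pe unfolding ellipsoid_def by simp
  finally show ?thesis using Gu unfolding G_def by blast
qed

theorem corollary1:
  fixes A :: "real^('n::finite + 'm::finite)^('n + 'm)"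
    and B1 :: "real^('d::finite)^('n + 'm)"
    and B2 :: "real^('u::finite)^('n + 'm)"
    and C1 :: "real^('n + 'm)^('e::finite)"
    and D11 :: "real^'d^'e"
    and D12 :: "real^'u^'e"
    and P :: "real^'n^'n" and Q :: "real^'m^'m"
    and R :: "real^('n + 'm)^('n + 'm)"
    and S :: "real^('n + 'm)^'u"
    and b f11 f12 f2 \<gamma> :: real
  assumes P_pd: "pos_def P" and Q_pd: "pos_def Q"
    and R_pd: "pos_def R"
    and pos: "0 < b" "0 < f11" "0 < f12" "0 < f2"
    and LMI1: "neg_def
      (block2
        (block2 (- R) (A ** R + B2 ** S) (transpose (A ** R + B2 ** S)) (- R))
        (blockr B1 (0 :: real^'e^('n + 'm)) (0 :: real^'d^('n + 'm)) (transpose (C1 ** R + D12 ** S)))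
        (blockr (transpose B1) (0 :: real^('n + 'm)^'d) (0 :: real^('n + 'm)^'e) (C1 ** R + D12 ** S))
        (block2 (- (f2 *\<^sub>R mat 1)) (transpose D11) D11 (- (b *\<^sub>R mat 1))))"
    and cost: "b + f11 + f12 + f2 < 2 * \<gamma>"
    and LMI2: "pos_def
      (block2
        (block2 (f11 *\<^sub>R mat 1) (0 :: real^'m^'n) (0 :: real^'n^'m) (f12 *\<^sub>R mat 1))
        (transpose (block2 (inv_sqrt P) (0 :: real^'m^'n) (0 :: real^'n^'m) (inv_sqrt Q)))
        (block2 (inv_sqrt P) (0 :: real^'m^'n) (0 :: real^'n^'m) (inv_sqrt Q))
        R)"
  shows "cl_stable A B1 B2 (S ** matrix_inv R) \<and>
    (SUP dz \<in> {(d, z0). l2norm d \<le> 1 \<and> z0 \<in> init_set P Q}.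
        l2norm (cl_output A B1 B2 C1 D11 D12 (S ** matrix_inv R) (snd dz) (fst dz)))
      < ennreal \<gamma>"
proof -
  define X where "X = matrix_inv R"
  define K where "K = S ** X"
  have invR: "invertible R" using pos_def_invertible[OF R_pd] .
  have RX: "R *v (X *v z) = z" for z unfolding X_def using matrix_inv_mv(1)[OF invR] .
  define V where "V z = (X *v z) \<bullet> z" for z
  have Vnn: "0 \<le> V z" for z
    using pos_def_nonneg[OF R_pd, of "X *v z"] unfolding V_def RX by simp
  define L where "L = (block2
        (block2 (- R) (A ** R + B2 ** S) (transpose (A ** R + B2 ** S)) (- R))
        (blockr B1 (0 :: real^'e^('n + 'm)) (0 :: real^'d^('n + 'm)) (transpose (C1 ** R + D12 ** S)))
        (blockr (transpose B1) (0 :: real^('n + 'm)^'d) (0 :: real^('n + 'm)^'e) (C1 ** R + D12 ** S))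
        (block2 (- (f2 *\<^sub>R mat 1)) (transpose D11) D11 (- (b *\<^sub>R mat 1))))"
  obtain \<epsilon> where epos: "\<epsilon> > 0" and eL: "\<And>w. \<epsilon> * (norm w)^2 \<le> w \<bullet> ((- L) *v w)"
    using pos_def_coercive LMI1 unfolding neg_def_def L_def by blast
  have step: "V (A *v z + B1 *v dd + B2 *v (K *v z)) - V z
      + (C1 *v z + D11 *v dd + D12 *v (K *v z)) \<bullet> (C1 *v z + D11 *v dd + D12 *v (K *v z)) / b
      - f2 * (dd \<bullet> dd) \<le> - \<epsilon> * (norm (X *v z))^2" for z dd
  proof -
    define z' where "z' = A *v z + B1 *v dd + B2 *v (K *v z)"
    define e where "e = C1 *v z + D11 *v dd + D12 *v (K *v z)"
    define w where "w = vjoin (vjoin (X *v z') (X *v z)) (vjoin dd ((1/b) *\<^sub>R e))"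
    have M1: "(A ** R + B2 ** S) *v (X *v z) + B1 *v dd = z'"
      unfolding z'_def K_def
      by (simp add: matrix_vector_mult_add_rdistrib matrix_vector_mul_assoc[symmetric] RX algebra_simps)
    have N1: "(C1 ** R + D12 ** S) *v (X *v z) + D11 *v dd = e"
      unfolding e_def K_def
      by (simp add: matrix_vector_mult_add_rdistrib matrix_vector_mul_assoc[symmetric] RX algebra_simps)
    have "w \<bullet> (L *v w) = V z' - V z + e \<bullet> e / b - f2 * (dd \<bullet> dd)"
      unfolding w_def L_def LMI1_form M1 N1 RX V_def using pos(1)
      by (simp add: inner_commute power2_eq_square field_simps)
    moreover have "\<epsilon> * (norm (X *v z))^2 \<le> \<epsilon> * (norm w)^2"
      unfolding w_def norm_vjoin using epos by simp
    moreover have "w \<bullet> ((- L) *v w) = - (w \<bullet> (L *v w))" by (simp add: neg_mv)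
    ultimately show ?thesis using eL[of w] unfolding z'_def e_def by linarith
  qed
  have csuc: "cl_state A B1 B2 K z0 d (Suc k) = A *v cl_state A B1 B2 K z0 d k + B1 *v d k
      + B2 *v (K *v cl_state A B1 B2 K z0 d k)" for z0 d k by (simp add: Let_def)
  have cout: "cl_output A B1 B2 C1 D11 D12 K z0 d k = C1 *v cl_state A B1 B2 K z0 d k + D11 *v d k
      + D12 *v (K *v cl_state A B1 B2 K z0 d k)" for z0 d k by (simp add: cl_output_def Let_def)
  have stab: "cl_stable A B1 B2 K"
    unfolding cl_stable_def
  proof
    fix z0
    define zs where "zs k = cl_state A B1 B2 K z0 (\<lambda>_. 0) k" for k
    define g where "g k = (norm (X *v zs k))^2" for k
    have st1: "V (zs (Suc k)) + \<epsilon> * g k \<le> V (zs k)" for k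
    proof -
      have "V (zs (Suc k)) - V (zs k) + (C1 *v zs k + D11 *v 0 + D12 *v (K *v zs k)) \<bullet>
          (C1 *v zs k + D11 *v 0 + D12 *v (K *v zs k)) / b - f2 * (0 \<bullet> 0) \<le> - \<epsilon> * g k"
        using step[of "zs k" 0] unfolding zs_def g_def csuc by simp
      moreover have "0 \<le> (C1 *v zs k + D11 *v 0 + D12 *v (K *v zs k)) \<bullet>
          (C1 *v zs k + D11 *v 0 + D12 *v (K *v zs k)) / b" using pos(1) by simp
      ultimately show ?thesis by simp
    qed
    have tel: "V (zs n) + \<epsilon> * (\<Sum>k<n. g k) \<le> V z0" for n
    proof (induction n)
      case 0 then show ?case by (simp add: zs_def)
    next
      case (Suc n) then show ?case using st1[of n] by (simp add: distrib_left)
    qed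
    have gnn: "0 \<le> g k" for k unfolding g_def by simp
    have "(\<Sum>k<n. g k) \<le> V z0 / \<epsilon>" for n
      using tel[of n] Vnn[of "zs n"] epos by (simp add: le_divide_eq mult.commute)
    then have "summable g" using gnn by (intro summableI_nonneg_bounded) auto
    then have "g \<longlonglongrightarrow> 0" by (rule summable_LIMSEQ_zero)
    then have "(\<lambda>k. sqrt (g k)) \<longlonglongrightarrow> sqrt 0" by (rule tendsto_real_sqrt)
    then have "(\<lambda>k. norm (X *v zs k)) \<longlonglongrightarrow> 0" unfolding g_def by simp
    then have "(\<lambda>k. X *v zs k) \<longlonglongrightarrow> 0" by (simp add: tendsto_norm_zero_iff)
    then have "(\<lambda>k. R *v (X *v zs k)) \<longlonglongrightarrow> R *v 0"
      by (rule bounded_linear.tendsto[OF matrix_vector_mul_bounded_linear])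
    then show "(\<lambda>k. cl_state A B1 B2 K z0 (\<lambda>_. 0) k) \<longlonglongrightarrow> 0"
      unfolding RX zs_def by simp
  qed
  have V0: "V z0 \<le> f11 + f12" if z0I: "z0 \<in> init_set P Q" for z0
  proof -
    obtain p q where z0: "z0 = vjoin p q" and pE: "p \<in> ellipsoid P" and qE: "q \<in> ellipsoid Q"
      using z0I unfolding init_set_def by blast
    obtain u1 where u1: "inv_sqrt P *v u1 = p" "u1 \<bullet> u1 \<le> 1" using ellipsoid_param[OF P_pd pE] by blast
    obtain u2 where u2: "inv_sqrt Q *v u2 = q" "u2 \<bullet> u2 \<le> 1" using ellipsoid_param[OF Q_pd qE] by blast
    define v where "v = (-1::real) *\<^sub>R (X *v z0)"
    have "0 \<le> f11 * (u1 \<bullet> u1) + f12 * (u2 \<bullet> u2) + 2 * (vjoin (inv_sqrt P *v u1) (inv_sqrt Q *v u2) \<bullet> v)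
        + v \<bullet> (R *v v)"
      using pos_def_nonneg[OF LMI2, of "vjoin (vjoin u1 u2) v"] unfolding LMI2_form .
    then have "0 \<le> f11 * (u1 \<bullet> u1) + f12 * (u2 \<bullet> u2) - V z0"
      unfolding u1 u2 z0[symmetric] v_def V_def
      by (simp add: matrix_vector_mult_scaleR mv_neg RX inner_commute)
    moreover have "f11 * (u1 \<bullet> u1) \<le> f11" using u1(2) pos(2) by (simp add: mult_left_le)
    moreover have "f12 * (u2 \<bullet> u2) \<le> f12" using u2(2) pos(3) by (simp add: mult_left_le)
    ultimately show ?thesis by linarith
  qed
  define C where "C = b * (f11 + f12 + f2)"
  have perf: "l2norm (cl_output A B1 B2 C1 D11 D12 K z0 d) \<le> ennreal (sqrt C)"
    if dl: "l2norm d \<le> 1" and z0I: "z0 \<in> init_set P Q" for d z0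
  proof -
    define zs where "zs k = cl_state A B1 B2 K z0 d k" for k
    define es where "es k = cl_output A B1 B2 C1 D11 D12 K z0 d k" for k
    have sd: "summable (\<lambda>k. (norm (d k))^2)"
    proof (rule ccontr)
      assume "\<not> summable (\<lambda>k. (norm (d k))^2)"
      then have "l2norm d = \<infinity>" unfolding l2norm_def by simp
      then have "(top::ennreal) \<le> 1" using dl by simp
      then have "(1::ennreal) = top" using top_unique by blast
      then show False by simp
    qed
    then have "ennreal (sqrt (\<Sum>k. (norm (d k))^2)) \<le> 1" using dl unfolding l2norm_def by simp
    then have "(\<Sum>k. (norm (d k))^2) \<le> 1" by (simp add: ennreal_le_1)
    then have dpart: "(\<Sum>k<n. (norm (d k))^2) \<le> 1" for n
      using sum_le_suminf[OF sd, of "{..<n}"] by simp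
    have st: "V (zs (Suc k)) + (norm (es k))^2 / b \<le> V (zs k) + f2 * (norm (d k))^2" for k
    proof -
      have "V (zs (Suc k)) - V (zs k) + es k \<bullet> es k / b - f2 * (d k \<bullet> d k) \<le> - \<epsilon> * (norm (X *v zs k))^2"
        using step[of "zs k" "d k"] unfolding zs_def es_def csuc cout .
      moreover have "0 \<le> \<epsilon> * (norm (X *v zs k))^2" using epos by simp
      ultimately show ?thesis by (simp add: power2_norm_eq_inner)
    qed
    have tel: "V (zs n) + (\<Sum>k<n. (norm (es k))^2) / b \<le> V z0 + f2 * (\<Sum>k<n. (norm (d k))^2)" for n
    proof (induction n)
      case 0 then show ?case by (simp add: zs_def)
    next
      case (Suc n) then show ?case using st[of n] by (simp add: add_divide_distrib distrib_left)
    qed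
    have epart: "(\<Sum>k<n. (norm (es k))^2) \<le> C" for n
    proof -
      have "(\<Sum>k<n. (norm (es k))^2) / b \<le> f11 + f12 + f2"
      proof -
        have "f2 * (\<Sum>k<n. (norm (d k))^2) \<le> f2" using dpart[of n] pos(4) by (simp add: mult_left_le)
        then show ?thesis using tel[of n] Vnn[of "zs n"] V0[OF z0I] by linarith
      qed
      then show ?thesis unfolding C_def using pos(1) by (simp add: divide_le_eq mult.commute)
    qed
    have se: "summable (\<lambda>k. (norm (es k))^2)"
      by (rule summableI_nonneg_bounded[OF _ epart]) simp
    have "(\<Sum>k. (norm (es k))^2) \<le> C" by (rule suminf_le_const[OF se epart])
    then have "l2norm es \<le> ennreal (sqrt C)"
      unfolding l2norm_def using se by (simp add: ennreal_leI)
    then show ?thesis unfolding es_def .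
  qed
  have gpos: "0 < \<gamma>" using cost pos by linarith
  have "sqrt C \<le> sqrt (((b + (f11 + f12 + f2)) / 2)^2)"
  proof (rule real_sqrt_le_mono)
    have "((b + (f11 + f12 + f2)) / 2)^2 - C = ((b - (f11 + f12 + f2)) / 2)^2"
      unfolding C_def by (simp add: power2_eq_square field_simps)
    moreover have "0 \<le> ((b - (f11 + f12 + f2)) / 2)^2" by simp
    ultimately show "C \<le> ((b + (f11 + f12 + f2)) / 2)^2" by linarith
  qed
  also have "\<dots> = (b + (f11 + f12 + f2)) / 2" using pos by simp
  also have "\<dots> < \<gamma>" using cost by simp
  finally have sC: "sqrt C < \<gamma>" .
  have "(SUP dz \<in> {(d, z0). l2norm d \<le> 1 \<and> z0 \<in> init_set P Q}.
        l2norm (cl_output A B1 B2 C1 D11 D12 K (snd dz) (fst dz))) \<le> ennreal (sqrt C)"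
    by (rule SUP_least) (auto intro: perf)
  also have "\<dots> < ennreal \<gamma>" using sC gpos by (rule ennreal_lessI[rotated])
  finally show ?thesis using stab unfolding K_def X_def by simp
qed

end
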